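(* Let $\mathcal{M}$ be a set of $m$ items with $m$ even, and let $v_1,v_2:2^{\mathcal{M}}\to\mathbb{R}$ be arbitrary valuation functions for $n=2$ agents. Let $\sigma_1,\sigma_2$ be independent uniformly random permutations of $\mathcal{M}$. Then, with probability at least $1-\frac{1}{m/2+1}$, an envy-free allocation exists for the renamed valuations $v_1^{\sigma_1},v_2^{\sigma_2}$. Moreover, this is tight up to constants: there exist additive valuation functions $v_1,v_2$ (for every $m\ge 2$) for which, with probability $1/m$, no envy-free allocation exists for $v_1^{\sigma_1},v_2^{\sigma_2}$.
   Context: For a valuation $v$ and a permutation $\sigma:\mathcal{M}\to\mathcal{M}$, the renamed valuation is $v^{\sigma}(S)=v(\sigma^{-1}(S))$, where $\sigma(S)=\{\sigma(g):g\in S\}$. An allocation is a partition $(A_1,A_2)$ of all items of $\mathcal{M}$; it is envy-free if each agent weakly prefers her own bundle to the other agent's bundle. A valuation $v$ is additive if $v(S)=\sum_{g\in S}v(\{g\})$ for all $S$. *)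

theory Defs
  imports Complex_Main "HOL-Combinatorics.Permutations"
begin

definition renamed :: "('a set \<Rightarrow> real) \<Rightarrow> ('a \<Rightarrow> 'a) \<Rightarrow> 'a set \<Rightarrow> real" where
  "renamed v \<sigma> S = v (inv \<sigma> ` S)"

definition envy_free_exists :: "'a set \<Rightarrow> ('a set \<Rightarrow> real) \<Rightarrow> ('a set \<Rightarrow> real) \<Rightarrow> bool" where
  "envy_free_exists M w1 w2 \<longleftrightarrow>
     (\<exists>A1 A2. A1 \<union> A2 = M \<and> A1 \<inter> A2 = {} \<and> w1 A1 \<ge> w1 A2 \<and> w2 A2 \<ge> w2 A1)"

definition additive_on :: "'a set \<Rightarrow> ('a set \<Rightarrow> real) \<Rightarrow> bool" where
  "additive_on M v \<longleftrightarrow> (\<forall>S\<subseteq>M. v S = (\<Sum>g\<in>S. v {g}))"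

definition prob_EF :: "'a set \<Rightarrow> ('a set \<Rightarrow> real) \<Rightarrow> ('a set \<Rightarrow> real) \<Rightarrow> real" where
  "prob_EF M v1 v2 =
     real (card {(\<sigma>1, \<sigma>2). \<sigma>1 permutes M \<and> \<sigma>2 permutes M \<and>
                  envy_free_exists M (renamed v1 \<sigma>1) (renamed v2 \<sigma>2)})
     / real (card ({\<sigma>. \<sigma> permutes M} \<times> {\<sigma>. \<sigma> permutes M}))"

end

theory Submission
  imports Defs
begin

lemma vimage_perm_diff:
  assumes "\<beta> permutes M" shows "\<beta> -` (M - S) = M - \<beta> -` S"
  using assms by (auto simp: permutes_in_image)

lemma renamed_vimage:
  assumes "\<sigma> permutes M" shows "renamed v \<sigma> S = v (\<sigma> -` S)"
  using assms by (simp add: renamed_def bij_vimage_eq_inv_image permutes_bij)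

lemma EF_iff:
  "envy_free_exists M w1 w2 \<longleftrightarrow> (\<exists>S\<subseteq>M. w1 S \<ge> w1 (M-S) \<and> w2 (M-S) \<ge> w2 S)"
proof
  assume "envy_free_exists M w1 w2"
  then obtain A1 A2 where h: "A1 \<union> A2 = M" "A1 \<inter> A2 = {}" "w1 A1 \<ge> w1 A2" "w2 A2 \<ge> w2 A1"
    unfolding envy_free_exists_def by blast
  have "A2 = M - A1" using h(1,2) by blast
  thus "\<exists>S\<subseteq>M. w1 S \<ge> w1 (M-S) \<and> w2 (M-S) \<ge> w2 S" using h by (intro exI[of _ A1]) auto
next
  assume "\<exists>S\<subseteq>M. w1 S \<ge> w1 (M-S) \<and> w2 (M-S) \<ge> w2 S"
  then obtain S where "S \<subseteq> M" "w1 S \<ge> w1 (M-S)" "w2 (M-S) \<ge> w2 S" by blast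
  thus "envy_free_exists M w1 w2" unfolding envy_free_exists_def
    by (intro exI[of _ S] exI[of _ "M - S"]) auto
qed

lemma path_lemma:
  assumes fin: "finite M"
  shows "\<forall>S T. S \<subseteq> M \<longrightarrow> T \<subseteq> M \<longrightarrow> card S = card T \<longrightarrow> card (S - T) = n \<longrightarrow> F S \<longrightarrow> \<not> F T \<longrightarrow>
    (\<exists>U x y. U \<subseteq> M \<and> x \<in> M \<and> y \<in> M \<and> x \<notin> U \<and> y \<notin> U \<and> x \<noteq> y \<and> card U + 1 = card S
        \<and> F (insert x U) \<and> \<not> F (insert y U))"
proof (induction n)
  case 0
  show ?case
  proof (intro allI impI)
    fix S T assume h: "S \<subseteq> M" "T \<subseteq> M" "card S = card T" "card (S - T) = 0" "F S" "\<not> F T"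
    have fS: "finite S" "finite T" using h fin finite_subset by auto
    have "S - T = {}" using h(4) fS by simp
    hence "S \<subseteq> T" by blast
    hence "S = T" using h(3) fS card_subset_eq by blast
    thus "\<exists>U x y. U \<subseteq> M \<and> x \<in> M \<and> y \<in> M \<and> x \<notin> U \<and> y \<notin> U \<and> x \<noteq> y \<and> card U + 1 = card S
        \<and> F (insert x U) \<and> \<not> F (insert y U)" using h by simp
  qed
next
  case (Suc n)
  show ?case
  proof (intro allI impI)
    fix S T assume h: "S \<subseteq> M" "T \<subseteq> M" "card S = card T" "card (S - T) = Suc n" "F S" "\<not> F T"
    have fS: "finite S" "finite T" using h fin finite_subset by auto
    obtain x where x: "x \<in> S - T" using h(4) by (metis card.empty ex_in_conv nat.distinct(1))
    have "card (T - S) = card (S - T)"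
      using h(3) fS by (metis card_Diff_subset_Int Int_commute Int_lower1 finite_Int)
    then obtain y where y: "y \<in> T - S" using h(4) by (metis card.empty ex_in_conv nat.distinct(1))
    define S' where "S' = insert y (S - {x})"
    have S'M: "S' \<subseteq> M" using h x y unfolding S'_def by blast
    have cS': "card S' = card S"
    proof -
      have "card S > 0" using x fS card_gt_0_iff by blast
      moreover have "card S' = Suc (card (S - {x}))" unfolding S'_def using x y fS by simp
      ultimately show ?thesis using x fS by simp
    qed
    have "S' - T = (S - T) - {x}" unfolding S'_def using y by blast
    hence cS'T: "card (S' - T) = n" using h(4) x fS by simp
    show "\<exists>U x y. U \<subseteq> M \<and> x \<in> M \<and> y \<in> M \<and> x \<notin> U \<and> y \<notin> U \<and> x \<noteq> y \<and> card U + 1 = card S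
        \<and> F (insert x U) \<and> \<not> F (insert y U)"
    proof (cases "F S'")
      case True
      from Suc.IH[rule_format, OF S'M h(2) _ cS'T True h(6)] cS' h(3) show ?thesis by simp
    next
      case False
      have "insert x (S - {x}) = S" using x by blast
      moreover have "card (S - {x}) + 1 = card S"
      proof -
        have "card S > 0" using x fS card_gt_0_iff by blast
        thus ?thesis using x fS by simp
      qed
      ultimately show ?thesis using False h x y S'_def
        by (intro exI[of _ "S - {x}"] exI[of _ x] exI[of _ y]) auto
    qed
  qed
qed


lemma transpose_vimage_insert:
  "a \<notin> U \<Longrightarrow> b \<notin> U \<Longrightarrow> transpose a b -` insert w U = insert (transpose a b w) U"
  by (auto simp: transpose_def split: if_splits)

lemma fib_bound:
  fixes M :: "'a set" and v :: "'a set \<Rightarrow> real" and F :: "'a set \<Rightarrow> bool"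
  assumes fin: "finite M" and cM: "card M = 2*k" and k1: "k \<ge> 1"
    and tot: "\<And>S. S \<subseteq> M \<Longrightarrow> F S \<or> F (M - S)"
  shows "(k+1) * card {\<sigma>. \<sigma> permutes M \<and> (\<forall>S\<subseteq>M. F S \<longrightarrow> v (\<sigma> -` S) > v (\<sigma> -` (M-S)))} \<le> fact (2*k)"
proof -
  define Fib where "Fib = {\<sigma>. \<sigma> permutes M \<and> (\<forall>S\<subseteq>M. F S \<longrightarrow> v (\<sigma> -` S) > v (\<sigma> -` (M-S)))}"
  have "(k+1) * card Fib \<le> fact (2*k)"
  proof (cases "Fib = {}")
    case True then show ?thesis by simp
  next
    case False
    then obtain \<sigma>0 where s0: "\<sigma>0 \<in> Fib" by blast
    have eqv: "F S \<longleftrightarrow> v (\<sigma> -` S) > v (\<sigma> -` (M-S))" if "\<sigma> \<in> Fib" "S \<subseteq> M" for \<sigma> S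
    proof
      assume "F S" thus "v (\<sigma> -` S) > v (\<sigma> -` (M-S))" using that unfolding Fib_def by blast
    next
      assume hh: "v (\<sigma> -` S) > v (\<sigma> -` (M-S))"
      show "F S"
      proof (rule ccontr)
        assume "\<not> F S"
        then have "F (M-S)" using tot that by blast
        then have "v (\<sigma> -` (M-S)) > v (\<sigma> -` (M-(M-S)))" using that(1) unfolding Fib_def by blast
        moreover have "M - (M-S) = S" using that(2) by blast
        ultimately show False using hh by simp
      qed
    qed
    have comp: "F (M - S) \<longleftrightarrow> \<not> F S" if "S \<subseteq> M" for S
    proof -
      have "M - (M-S) = S" using that by blast
      thus ?thesis using eqv[OF s0 that] eqv[OF s0, of "M-S"] tot[OF that] by auto
    qed
    obtain A where A: "A \<subseteq> M" "card A = k" using obtain_subset_with_card_n[of k M] cM by auto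
    have cMA: "card (M - A) = k" using A fin cM by (simp add: card_Diff_subset finite_subset)
    have "\<exists>S T. S \<subseteq> M \<and> T \<subseteq> M \<and> card S = k \<and> card T = k \<and> F S \<and> \<not> F T"
    proof (cases "F A")
      case True thus ?thesis using A cMA comp[OF A(1)] by (intro exI[of _ A] exI[of _ "M-A"]) auto
    next
      case False thus ?thesis using A cMA comp[OF A(1)] by (intro exI[of _ "M-A"] exI[of _ A]) auto
    qed
    then obtain S T where ST: "S \<subseteq> M" "T \<subseteq> M" "card S = k" "card T = k" "F S" "\<not> F T" by blast
    obtain U x y where U: "U \<subseteq> M" "x \<in> M" "y \<in> M" "x \<notin> U" "y \<notin> U" "x \<noteq> y" "card U + 1 = k"
        "F (insert x U)" "\<not> F (insert y U)"
      using path_lemma[OF fin, rule_format, OF ST(1,2) _ refl ST(5,6)] ST(3,4) by metis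
    define V where "V = M - U"
    define Vp where "Vp = {z\<in>V. F (insert z U)}"
    have cV: "card V = k+1" unfolding V_def using U fin cM by (simp add: card_Diff_subset finite_subset)
    have xVp: "x \<in> Vp" and yV: "y \<in> V" and yVp: "y \<notin> Vp" using U unfolding Vp_def V_def by auto
    have VpV: "Vp \<subseteq> V" unfolding Vp_def by auto
    define \<beta> where "\<beta> z = (if z \<in> Vp - {x} then transpose y z else transpose x z)" for z
    have \<beta>perm: "\<beta> z permutes M" if "z \<in> V" for z
      using that xVp yV VpV unfolding \<beta>_def V_def by (auto intro!: permutes_swap_id)
    have \<beta>inv: "\<beta> z \<circ> \<beta> z = id" for z unfolding \<beta>_def by simp
    have \<beta>U: "\<beta> z -` insert w U = insert (\<beta> z w) U" if "z \<in> V" for z w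
      using that xVp yV VpV U unfolding \<beta>_def V_def
      by (auto intro!: transpose_vimage_insert)
    have \<beta>V: "\<beta> z w \<in> V" if "z \<in> V" "w \<in> V" for z w
      using that xVp yV VpV unfolding \<beta>_def V_def
      by (auto simp: transpose_def)
    have sep: "\<exists>w\<in>V. (\<beta> z w \<in> Vp) \<noteq> (\<beta> z' w \<in> Vp)" if "z \<in> V" "z' \<in> V" "z \<noteq> z'" for z z'
    proof -
      have gen: "\<exists>w\<in>V. (\<beta> a w \<in> Vp) \<noteq> (\<beta> b w \<in> Vp)"
        if "a \<in> V" "b \<in> V" "a \<noteq> b" "a \<notin> Vp \<or> (a \<in> Vp - {x} \<and> b \<in> Vp)" for a b
      proof (cases "a \<notin> Vp")
        case True
        show ?thesis
        proof (cases "b \<notin> Vp")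
          case True
          thus ?thesis using \<open>a \<notin> Vp\<close> that xVp unfolding \<beta>_def
            by (intro bexI[of _ a]) (auto simp: transpose_def)
        next
          case False
          show ?thesis
          proof (cases "b = x")
            case True
            thus ?thesis using \<open>a \<notin> Vp\<close> that xVp unfolding \<beta>_def
              by (intro bexI[of _ a]) (auto simp: transpose_def)
          next
            case False
            thus ?thesis using \<open>a \<notin> Vp\<close> \<open>\<not> b \<notin> Vp\<close> that xVp yVp VpV unfolding \<beta>_def
              by (intro bexI[of _ x]) (auto simp: transpose_def)
          qed
        qed
      next
        case False
        hence a: "a \<in> Vp - {x}" "b \<in> Vp" using that by auto
        show ?thesis
        proof (cases "b = x")
          case True
          thus ?thesis using a that xVp yVp unfolding \<beta>_def
            by (intro bexI[of _ a]) (auto simp: transpose_def)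
        next
          case False
          thus ?thesis using a that xVp yVp unfolding \<beta>_def
            by (intro bexI[of _ a]) (auto simp: transpose_def)
        qed
      qed
      show ?thesis
      proof (cases "z \<notin> Vp \<or> (z \<in> Vp - {x} \<and> z' \<in> Vp)")
        case True thus ?thesis using gen that by blast
      next
        case False
        hence "z' \<notin> Vp \<or> (z' \<in> Vp - {x} \<and> z \<in> Vp)" using that by auto
        from gen[OF that(2,1) _ this] that show ?thesis by metis
      qed
    qed
    define \<Phi> where "\<Phi> p = \<beta> (fst p) \<circ> snd p" for p :: "'a \<times> ('a \<Rightarrow> 'a)"
    have key: "F (\<beta> z -` S) \<longleftrightarrow> v ((\<beta> z \<circ> \<sigma>) -` S) > v ((\<beta> z \<circ> \<sigma>) -` (M - S))"
      if "z \<in> V" "\<sigma> \<in> Fib" "S \<subseteq> M" for z \<sigma> S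
    proof -
      have "\<beta> z -` S \<subseteq> M" using \<beta>perm[OF that(1)] that(3) by (auto simp: permutes_in_image)
      moreover have "(\<beta> z \<circ> \<sigma>) -` (M - S) = \<sigma> -` (M - \<beta> z -` S)"
        using vimage_perm_diff[OF \<beta>perm[OF that(1)]] by (simp add: vimage_comp[symmetric])
      moreover have "(\<beta> z \<circ> \<sigma>) -` S = \<sigma> -` (\<beta> z -` S)" by (simp add: vimage_comp)
      ultimately show ?thesis using eqv[OF that(2)] by simp
    qed
    have inj: "inj_on \<Phi> (V \<times> Fib)"
    proof (rule inj_onI)
      fix p q assume p: "p \<in> V \<times> Fib" and q: "q \<in> V \<times> Fib" and e: "\<Phi> p = \<Phi> q"
      obtain z \<sigma> where pz: "p = (z, \<sigma>)" by (cases p)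
      obtain z' \<sigma>' where qz: "q = (z', \<sigma>')" by (cases q)
      have e': "\<beta> z \<circ> \<sigma> = \<beta> z' \<circ> \<sigma>'" using e unfolding \<Phi>_def pz qz by simp
      have zz: "z = z'"
      proof (rule ccontr)
        assume "z \<noteq> z'"
        then obtain w where w: "w \<in> V" "(\<beta> z w \<in> Vp) \<noteq> (\<beta> z' w \<in> Vp)" using sep p q pz qz by auto
        have wU: "insert w U \<subseteq> M" using w U unfolding V_def by auto
        have "F (\<beta> z -` insert w U) \<longleftrightarrow> F (\<beta> z' -` insert w U)"
          using key[OF _ _ wU, of z \<sigma>] key[OF _ _ wU, of z' \<sigma>'] p q pz qz e' by auto
        hence "F (insert (\<beta> z w) U) \<longleftrightarrow> F (insert (\<beta> z' w) U)"
          using \<beta>U p q pz qz by auto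
        moreover have "\<beta> z w \<in> V" "\<beta> z' w \<in> V" using \<beta>V w p q pz qz by auto
        ultimately have "(\<beta> z w \<in> Vp) = (\<beta> z' w \<in> Vp)" unfolding Vp_def by auto
        thus False using w by simp
      qed
      have "\<beta> z \<circ> (\<beta> z \<circ> \<sigma>) = \<beta> z \<circ> (\<beta> z \<circ> \<sigma>')" using e' zz by simp
      hence "\<sigma> = \<sigma>'" using \<beta>inv[of z] by (simp add: comp_assoc[symmetric])
      thus "p = q" using pz qz zz by simp
    qed
    have img: "\<Phi> ` (V \<times> Fib) \<subseteq> {\<tau>. \<tau> permutes M}"
      unfolding \<Phi>_def Fib_def using \<beta>perm by (auto intro: permutes_compose)
    have "card (V \<times> Fib) \<le> card {\<tau>. \<tau> permutes M}"
      using card_inj_on_le[OF inj img] fin finite_permutations by blast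
    thus ?thesis using cV card_permutations[OF cM fin] by (simp add: card_cartesian_product)
  qed
  thus ?thesis unfolding Fib_def .
qed


lemma part1:
  fixes M :: "'a set" and v1 v2 :: "'a set \<Rightarrow> real"
  assumes fin: "finite M" and ev: "even (card M)"
  shows "prob_EF M v1 v2 \<ge> 1 - 1 / (real (card M) / 2 + 1)"
proof -
  obtain k where cM: "card M = 2*k" using ev by (auto elim: evenE)
  define P where "P = {\<sigma>. \<sigma> permutes M}"
  have finP: "finite P" and cP: "card P = fact (2*k)"
    unfolding P_def using fin cM by (auto simp: finite_permutations card_permutations)
  define Good where "Good = {(\<sigma>1, \<sigma>2). \<sigma>1 permutes M \<and> \<sigma>2 permutes M \<and>
                  envy_free_exists M (renamed v1 \<sigma>1) (renamed v2 \<sigma>2)}"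
  define Bad where "Bad = {(\<sigma>1, \<sigma>2). \<sigma>1 permutes M \<and> \<sigma>2 permutes M \<and>
                  \<not> envy_free_exists M (renamed v1 \<sigma>1) (renamed v2 \<sigma>2)}"
  have prob: "prob_EF M v1 v2 = real (card Good) / real (card (P \<times> P))"
    unfolding prob_EF_def Good_def P_def by simp
  have GB: "Good \<union> Bad = P \<times> P" "Good \<inter> Bad = {}" unfolding Good_def Bad_def P_def by auto
  have finPP: "finite (P \<times> P)" using finP by simp
  have cGB: "card Good + card Bad = card (P \<times> P)"
  proof -
    have "Good \<subseteq> P \<times> P" "Bad \<subseteq> P \<times> P" using GB(1) by blast+
    hence "finite Good" "finite Bad" using finPP finite_subset by blast+
    thus ?thesis using card_Un_disjoint[of Good Bad] GB by simp
  qed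
  have cPP: "card (P \<times> P) = fact (2*k) * fact (2*k)" using cP by (simp add: card_cartesian_product)
  show ?thesis
  proof (cases "k = 0")
    case True
    thus ?thesis using prob cM by simp
  next
    case False
    hence k1: "k \<ge> 1" by simp
    define F where "F \<sigma>1 S = (renamed v1 \<sigma>1 S \<ge> renamed v1 \<sigma>1 (M - S))" for \<sigma>1 S
    define Fib where "Fib \<sigma>1 = {\<sigma>. \<sigma> permutes M \<and> (\<forall>S\<subseteq>M. F \<sigma>1 S \<longrightarrow> v2 (\<sigma> -` S) > v2 (\<sigma> -` (M-S)))}"
      for \<sigma>1
    have fb: "(k+1) * card (Fib \<sigma>1) \<le> fact (2*k)" for \<sigma>1
    proof -
      have "F \<sigma>1 S \<or> F \<sigma>1 (M - S)" if "S \<subseteq> M" for S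
      proof -
        have "M - (M - S) = S" using that by blast
        thus ?thesis unfolding F_def by auto
      qed
      thus ?thesis unfolding Fib_def using fib_bound[OF fin cM k1] by blast
    qed
    have BadS: "Bad = Sigma P Fib"
    proof -
      have "(\<not> envy_free_exists M (renamed v1 \<sigma>1) (renamed v2 \<sigma>2)) \<longleftrightarrow>
            (\<forall>S\<subseteq>M. F \<sigma>1 S \<longrightarrow> v2 (\<sigma>2 -` S) > v2 (\<sigma>2 -` (M-S)))"
        if "\<sigma>2 permutes M" for \<sigma>1 \<sigma>2
        unfolding EF_iff F_def renamed_vimage[OF that] by (auto simp: not_le)
      thus ?thesis unfolding Bad_def P_def Fib_def by auto
    qed
    have finFib: "finite (Fib \<sigma>1)" for \<sigma>1
      using finite_permutations[OF fin] unfolding Fib_def by (rule rev_finite_subset) auto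
    have cB: "card Bad = (\<Sum>\<sigma>1\<in>P. card (Fib \<sigma>1))" unfolding BadS
      using card_SigmaI[OF finP] finFib by blast
    have "(k+1) * card Bad = (\<Sum>\<sigma>1\<in>P. (k+1) * card (Fib \<sigma>1))" unfolding cB
      by (simp add: sum_distrib_left)
    also have "\<dots> \<le> (\<Sum>\<sigma>1\<in>P. fact (2*k))" by (rule sum_mono) (rule fb)
    also have "\<dots> = fact (2*k) * fact (2*k)" using cP by simp
    finally have bB: "(k+1) * card Bad \<le> card (P \<times> P)" using cPP by simp
    have Npos: "card (P \<times> P) > 0" using cPP by simp
    define N where "N = real (card (P \<times> P))"
    define B where "B = real (card Bad)"
    have Np: "N > 0" unfolding N_def using Npos by simp
    have G: "real (card Good) = N - B"
    proof -
      have "real (card Good) + real (card Bad) = real (card (P \<times> P))"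
        using arg_cong[OF cGB, of real] by simp
      thus ?thesis unfolding N_def B_def by linarith
    qed
    have bB': "(real k + 1) * B \<le> N"
    proof -
      have "real ((k+1) * card Bad) \<le> real (card (P \<times> P))" using bB by (rule of_nat_mono)
      thus ?thesis unfolding N_def B_def by (simp add: algebra_simps)
    qed
    have "real (card M) / 2 + 1 = real k + 1" using cM by simp
    moreover have "1 - 1 / (real k + 1) \<le> (N - B) / N"
    proof -
      have kp: "real k + 1 > 0" by simp
      have "B \<le> N / (real k + 1)" using bB' kp by (simp add: pos_le_divide_eq mult.commute)
      hence "B / N \<le> 1 / (real k + 1)" using Np by (simp add: pos_divide_le_eq)
      moreover have "(N - B) / N = 1 - B / N" using Np by (simp add: diff_divide_distrib)
      ultimately show ?thesis by linarith
    qed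
    ultimately show ?thesis using prob G N_def by simp
  qed
qed


lemma card_fix_le:
  fixes M :: "'a set"
  assumes fin: "finite M" and a: "a \<in> M" and b: "b \<in> M" and g: "g0 \<in> M"
  shows "card {\<sigma>. \<sigma> permutes M \<and> \<sigma> g0 = a} \<le> card {\<sigma>. \<sigma> permutes M \<and> \<sigma> g0 = b}"
proof -
  have inj: "inj_on (\<lambda>\<sigma>. transpose a b \<circ> \<sigma>) {\<sigma>. \<sigma> permutes M \<and> \<sigma> g0 = a}"
  proof (rule inj_onI)
    fix p q assume e: "transpose a b \<circ> p = transpose a b \<circ> q"
    show "p = q"
    proof
      fix x
      have "transpose a b (p x) = transpose a b (q x)" using fun_cong[OF e, of x] by simp
      thus "p x = q x" by (rule transpose_eq_imp_eq)
    qed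
  qed
  have img: "(\<lambda>\<sigma>. transpose a b \<circ> \<sigma>) ` {\<sigma>. \<sigma> permutes M \<and> \<sigma> g0 = a} \<subseteq> {\<sigma>. \<sigma> permutes M \<and> \<sigma> g0 = b}"
  proof
    fix \<tau> assume "\<tau> \<in> (\<lambda>\<sigma>. transpose a b \<circ> \<sigma>) ` {\<sigma>. \<sigma> permutes M \<and> \<sigma> g0 = a}"
    then obtain \<sigma> where s: "\<sigma> permutes M" "\<sigma> g0 = a" and t: "\<tau> = transpose a b \<circ> \<sigma>" by blast
    have "\<tau> permutes M" unfolding t by (rule permutes_compose[OF s(1) permutes_swap_id[OF a b]])
    moreover have "\<tau> g0 = b" unfolding t using s(2) by simp
    ultimately show "\<tau> \<in> {\<sigma>. \<sigma> permutes M \<and> \<sigma> g0 = b}" by blast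
  qed
  have "finite {\<sigma>. \<sigma> permutes M \<and> \<sigma> g0 = b}"
    using finite_permutations[OF fin] by (rule rev_finite_subset) auto
  thus ?thesis using card_inj_on_le[OF inj img] by blast
qed

lemma part2:
  fixes M :: "'a set"
  assumes fin: "finite M" and c2: "card M \<ge> 2"
  shows "\<exists>v1 v2. additive_on M v1 \<and> additive_on M v2 \<and> 1 - prob_EF M v1 v2 = 1 / real (card M)"
proof -
  obtain g0 where g0: "g0 \<in> M" using c2 by (metis card.empty ex_in_conv not_numeral_le_zero)
  define m where "m = card M"
  define v :: "'a set \<Rightarrow> real" where "v S = (if g0 \<in> S then 1 else 0)" for S
  have add: "additive_on M v"
    unfolding additive_on_def
  proof (intro allI impI)
    fix S assume "S \<subseteq> M"
    hence "finite S" using fin finite_subset by blast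
    thus "v S = (\<Sum>g\<in>S. v {g})" unfolding v_def by simp
  qed
  define P where "P = {\<sigma>. \<sigma> permutes M}"
  define E where "E b = {\<sigma>. \<sigma> permutes M \<and> \<sigma> g0 = b}" for b
  have finP: "finite P" and cP: "card P = fact m"
    unfolding P_def m_def using fin by (auto simp: finite_permutations card_permutations)
  have finE: "finite (E b)" for b
    using finite_permutations[OF fin] unfolding E_def by (rule rev_finite_subset) auto
  have cE: "card (E b) = card (E g0)" if "b \<in> M" for b
    using card_fix_le[OF fin that g0 g0] card_fix_le[OF fin g0 that g0] unfolding E_def by simp
  have "P = (\<Union>b\<in>M. E b)" unfolding P_def E_def using g0 by (auto simp: permutes_in_image)
  moreover have "card (\<Union>b\<in>M. E b) = (\<Sum>b\<in>M. card (E b))"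
  proof (rule card_UN_disjoint[OF fin])
    show "\<forall>i\<in>M. finite (E i)" using finE by blast
    show "\<forall>i\<in>M. \<forall>j\<in>M. i \<noteq> j \<longrightarrow> E i \<inter> E j = {}" unfolding E_def by blast
  qed
  ultimately have "card P = (\<Sum>b\<in>M. card (E b))" by simp
  also have "\<dots> = m * card (E g0)" using cE unfolding m_def by simp
  finally have me: "m * card (E g0) = fact m" using cP by simp
  have EF: "envy_free_exists M (renamed v \<sigma>1) (renamed v \<sigma>2) \<longleftrightarrow> \<sigma>1 g0 \<noteq> \<sigma>2 g0"
    if "\<sigma>1 permutes M" "\<sigma>2 permutes M" for \<sigma>1 \<sigma>2
  proof -
    have r: "renamed v \<sigma> S = (if \<sigma> g0 \<in> S then 1 else 0)" if "\<sigma> permutes M" for \<sigma> S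
      unfolding renamed_vimage[OF that] v_def by simp
    have m1: "\<sigma>1 g0 \<in> M" "\<sigma>2 g0 \<in> M" using that g0 by (auto simp: permutes_in_image)
    show ?thesis unfolding EF_iff r[OF that(1)] r[OF that(2)]
    proof
      assume "\<exists>S\<subseteq>M. (if \<sigma>1 g0 \<in> M - S then 1 else 0) \<le> (if \<sigma>1 g0 \<in> S then 1 else (0::real)) \<and>
          (if \<sigma>2 g0 \<in> S then 1 else 0) \<le> (if \<sigma>2 g0 \<in> M - S then 1 else (0::real))"
      then obtain S where "S \<subseteq> M" "(if \<sigma>1 g0 \<in> M - S then 1 else 0) \<le> (if \<sigma>1 g0 \<in> S then 1 else (0::real))"
          "(if \<sigma>2 g0 \<in> S then 1 else 0) \<le> (if \<sigma>2 g0 \<in> M - S then 1 else (0::real))" by blast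
      thus "\<sigma>1 g0 \<noteq> \<sigma>2 g0" using m1 by (auto split: if_splits)
    next
      assume "\<sigma>1 g0 \<noteq> \<sigma>2 g0"
      thus "\<exists>S\<subseteq>M. (if \<sigma>1 g0 \<in> M - S then 1 else 0) \<le> (if \<sigma>1 g0 \<in> S then 1 else (0::real)) \<and>
          (if \<sigma>2 g0 \<in> S then 1 else 0) \<le> (if \<sigma>2 g0 \<in> M - S then 1 else (0::real))"
        using m1 by (intro exI[of _ "{\<sigma>1 g0}"]) auto
    qed
  qed
  define Good where "Good = {(\<sigma>1, \<sigma>2). \<sigma>1 permutes M \<and> \<sigma>2 permutes M \<and>
                  envy_free_exists M (renamed v \<sigma>1) (renamed v \<sigma>2)}"
  define Bad where "Bad = Sigma P (\<lambda>\<sigma>1. E (\<sigma>1 g0))"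
  have prob: "prob_EF M v v = real (card Good) / real (card (P \<times> P))"
    unfolding prob_EF_def Good_def P_def by simp
  have memG: "p \<in> Good \<longleftrightarrow> p \<in> P \<times> P \<and> fst p g0 \<noteq> snd p g0" for p
  proof (cases p)
    case (Pair a b)
    show ?thesis unfolding Pair Good_def P_def using EF[of a b] by auto
  qed
  have memB: "p \<in> Bad \<longleftrightarrow> p \<in> P \<times> P \<and> fst p g0 = snd p g0" for p
    by (cases p) (auto simp: Bad_def P_def E_def)
  have GB: "Good \<union> Bad = P \<times> P" "Good \<inter> Bad = {}"
    by (auto simp: memG memB)
  have finPP: "finite (P \<times> P)" using finP by simp
  have cGB: "card Good + card Bad = card (P \<times> P)"
  proof -
    have "Good \<subseteq> P \<times> P" "Bad \<subseteq> P \<times> P" using GB(1) by blast+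
    hence "finite Good" "finite Bad" using finPP finite_subset by blast+
    thus ?thesis using card_Un_disjoint[of Good Bad] GB by simp
  qed
  have cB: "card Bad = fact m * card (E g0)"
  proof -
    have "card Bad = (\<Sum>\<sigma>1\<in>P. card (E (\<sigma>1 g0)))" unfolding Bad_def
      by (rule card_SigmaI[OF finP]) (simp add: finE)
    also have "\<dots> = (\<Sum>\<sigma>1\<in>P. card (E g0))"
    proof (rule sum.cong[OF refl])
      fix x assume "x \<in> P"
      hence "x g0 \<in> M" using g0 unfolding P_def by (simp add: permutes_in_image)
      thus "card (E (x g0)) = card (E g0)" by (rule cE)
    qed
    finally show ?thesis using cP by simp
  qed
  have cPP: "card (P \<times> P) = fact m * fact m" using cP by (simp add: card_cartesian_product)
  have mpos: "m > 0" using c2 unfolding m_def by simp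
  have "1 - prob_EF M v v = real (card Bad) / real (card (P \<times> P))"
  proof -
    have Np: "real (card (P \<times> P)) > 0" using cPP by simp
    have "real (card Good) + real (card Bad) = real (card (P \<times> P))"
      using arg_cong[OF cGB, of real] by simp
    thus ?thesis unfolding prob using Np by (simp add: field_simps)
  qed
  also have "\<dots> = real (card (E g0)) / real (fact m)"
    unfolding cB cPP by simp
  also have "\<dots> = 1 / real m"
  proof -
    define e where "e = real (card (E g0))"
    have h: "real (fact m) = real m * e" unfolding e_def using arg_cong[OF me, of real] by simp
    have "real (fact m) > 0" by simp
    hence ep: "e \<noteq> 0" using h by auto
    have "e / real (fact m) = e / (real m * e)" by (simp only: h)
    also have "\<dots> = 1 / real m" using ep by simp
    finally show ?thesis unfolding e_def .
  qed
  finally show ?thesis using add unfolding m_def by blast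
qed

theorem theorem3p5:
  shows "(\<forall>(M :: 'a set) v1 v2. finite M \<and> even (card M) \<longrightarrow>
            prob_EF M v1 v2 \<ge> 1 - 1 / (real (card M) / 2 + 1))
       \<and> (\<forall>M :: 'a set. finite M \<and> card M \<ge> 2 \<longrightarrow>
            (\<exists>v1 v2. additive_on M v1 \<and> additive_on M v2 \<and>
                     1 - prob_EF M v1 v2 = 1 / real (card M)))"
  using part1 part2 by blast

end
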